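(* Let $S$ be an infinite set and $\mathcal{F}\subseteq 2^S$ nontrivial and closed under finite unions. Let $\mathbf{A}=(A_1,\dots,A_k)$ be a classification problem with $k>1$. Then $\mathbf{A}\in\mathit{core}_k(\mathcal{F})$ if and only if $A_1\cup\dots\cup A_k$ is $\mathcal{F}$-cohesive.
   Context: $\mathcal{F}$ is nontrivial if $\emptyset,S\in\mathcal{F}$ and for all $Q\in\mathcal{F}$ and finite $E\subseteq S$ both $Q\cup E\in\mathcal{F}$ and $Q\setminus E\in\mathcal{F}$. A classification problem is a vector $(A_1,\dots,A_k)$, $k\ge1$, of pairwise disjoint infinite subsets of $S$, of length $k$. For vectors $\mathbf{B}=(B_1,\dots,B_m)$, $\mathbf{Q}=(Q_1,\dots,Q_k)$, $\mathbf{B}\le\mathbf{Q}$ means $1\le m\le k$ and there is an injective $\sigma:\{1,\dots,m\}\to\{1,\dots,k\}$ with $B_i\subseteq Q_{\sigma(i)}$. An $\mathcal{F}$-partition is a vector of pairwise disjoint members of $\mathcal{F}$ whose union is $S$. $\mathit{class}_k(\mathcal{F})$: classification problems $\mathbf{A}$ of length $k$ with $\mathbf{A}\le\mathbf{Q}$ for some $\mathcal{F}$-partition $\mathbf{Q}$ of length $k$. For $k>1$, $\mathit{core}_k(\mathcal{F})$ is the set of classification problems $\mathbf{A}$ of length $k$ such that every classification problem $\mathbf{A}'\le\mathbf{A}$ with $|\mathbf{A}'|>1$ satisfies $\mathbf{A}'\notin\mathit{class}_{|\mathbf{A}'|}(\mathcal{F})$. A set $A\subseteq S$ is $\mathcal{F}$-cohesive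 if $A$ is infinite and for every $Q$ with $Q\in\mathcal{F}$ and $S\setminus Q\in\mathcal{F}$, either $A\cap Q$ or $A\setminus Q$ is finite. *)

theory Defs
  imports Main
begin

text \<open>Vectors of sets are represented as lists; positions are 0-based.\<close>

definition nontrivial :: "'a set \<Rightarrow> 'a set set \<Rightarrow> bool" where
  "nontrivial S F \<longleftrightarrow> {} \<in> F \<and> S \<in> F \<and>
     (\<forall>Q\<in>F. \<forall>E. E \<subseteq> S \<and> finite E \<longrightarrow> Q \<union> E \<in> F \<and> Q - E \<in> F)"

definition closed_fin_unions :: "'a set set \<Rightarrow> bool" where
  "closed_fin_unions F \<longleftrightarrow> (\<forall>P Q. P \<in> F \<and> Q \<in> F \<longrightarrow> P \<union> Q \<in> F)"

definition pairwise_disj :: "'a set list \<Rightarrow> bool" where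
  "pairwise_disj As \<longleftrightarrow>
     (\<forall>i j. i < length As \<and> j < length As \<and> i \<noteq> j \<longrightarrow> As ! i \<inter> As ! j = {})"

definition class_problem :: "'a set \<Rightarrow> 'a set list \<Rightarrow> bool" where
  "class_problem S As \<longleftrightarrow> length As \<ge> 1 \<and> pairwise_disj As \<and>
     (\<forall>i < length As. infinite (As ! i) \<and> As ! i \<subseteq> S)"

definition vec_le :: "'a set list \<Rightarrow> 'a set list \<Rightarrow> bool" where
  "vec_le B Q \<longleftrightarrow> 1 \<le> length B \<and> length B \<le> length Q \<and>
     (\<exists>\<sigma>. inj_on \<sigma> {0..<length B} \<and> \<sigma> ` {0..<length B} \<subseteq> {0..<length Q} \<and>
         (\<forall>i < length B. B ! i \<subseteq> Q ! (\<sigma> i)))"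

definition F_partition :: "'a set \<Rightarrow> 'a set set \<Rightarrow> 'a set list \<Rightarrow> bool" where
  "F_partition S F Q \<longleftrightarrow> pairwise_disj Q \<and> set Q \<subseteq> F \<and> \<Union>(set Q) = S"

definition class_k :: "'a set \<Rightarrow> 'a set set \<Rightarrow> nat \<Rightarrow> 'a set list set" where
  "class_k S F k = {A. class_problem S A \<and> length A = k \<and>
      (\<exists>Q. F_partition S F Q \<and> length Q = k \<and> vec_le A Q)}"

definition core_k :: "'a set \<Rightarrow> 'a set set \<Rightarrow> nat \<Rightarrow> 'a set list set" where
  "core_k S F k = {A. class_problem S A \<and> length A = k \<and>
      (\<forall>A'. class_problem S A' \<and> vec_le A' A \<and> length A' > 1 \<longrightarrow>
            A' \<notin> class_k S F (length A'))}"

definition cohesive :: "'a set \<Rightarrow> 'a set set \<Rightarrow> 'a set \<Rightarrow> bool" where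
  "cohesive S F A \<longleftrightarrow> infinite A \<and>
     (\<forall>Q. Q \<in> F \<and> S - Q \<in> F \<longrightarrow> finite (A \<inter> Q) \<or> finite (A - Q))"

end

theory Submission
  imports Defs
begin

lemma union_in_F:
  assumes "finite X" "X \<subseteq> F" "{} \<in> F" "closed_fin_unions F"
  shows "\<Union>X \<in> F"
  using assms
proof (induction X rule: finite_induct)
  case empty then show ?case by simp
next
  case (insert x X)
  then show ?case unfolding closed_fin_unions_def by auto
qed

lemma infinite_mono': "A \<subseteq> B \<Longrightarrow> infinite A \<Longrightarrow> infinite B"
  using finite_subset by blast

theorem theorem3p5:
  fixes S :: "'a set" and F :: "'a set set" and A :: "'a set list" and k :: nat
  assumes "infinite S"
    and "F \<subseteq> Pow S"
    and "nontrivial S F"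
    and "closed_fin_unions F"
    and "class_problem S A"
    and "length A = k"
    and "k > 1"
  shows "A \<in> core_k S F k \<longleftrightarrow> cohesive S F (\<Union>(set A))"
proof
  assume core: "A \<in> core_k S F k"
  let ?U = "\<Union>(set A)"
  have Ainf: "\<And>i. i < k \<Longrightarrow> infinite (A ! i)"
    using assms(5,6) unfolding class_problem_def by auto
  have AS: "\<And>i. i < k \<Longrightarrow> A ! i \<subseteq> S"
    using assms(5,6) unfolding class_problem_def by auto
  have Adisj: "\<And>i j. i < k \<Longrightarrow> j < k \<Longrightarrow> i \<noteq> j \<Longrightarrow> A ! i \<inter> A ! j = {}"
    using assms(5,6) unfolding class_problem_def pairwise_disj_def by auto
  have Usub: "\<And>i. i < k \<Longrightarrow> A ! i \<subseteq> ?U"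
    using assms(6) by (metis Union_upper nth_mem)
  have Uinf: "infinite ?U" using Ainf[of 0] Usub[of 0] assms(7) infinite_mono' by auto
  show "cohesive S F ?U"
    unfolding cohesive_def
  proof (intro conjI Uinf allI impI)
    fix Q assume Q: "Q \<in> F \<and> S - Q \<in> F"
    show "finite (?U \<inter> Q) \<or> finite (?U - Q)"
    proof (rule ccontr)
      assume nc: "\<not> (finite (?U \<inter> Q) \<or> finite (?U - Q))"
      have key: "\<exists>a b. a < k \<and> b < k \<and> a \<noteq> b \<and> infinite (A!a \<inter> Q) \<and> infinite (A!b - Q)"
      proof -
        have e1: "?U \<inter> Q = (\<Union>i\<in>{..<k}. A!i \<inter> Q)"
          using assms(6) by (auto simp: in_set_conv_nth) (metis nth_mem)+
        have e2: "?U - Q = (\<Union>i\<in>{..<k}. A!i - Q)"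
          using assms(6) by (auto simp: in_set_conv_nth) (metis nth_mem)+
        obtain i where i: "i < k" "infinite (A!i \<inter> Q)"
          using nc e1 by (metis finite_UN finite_lessThan lessThan_iff)
        obtain j where j: "j < k" "infinite (A!j - Q)"
          using nc e2 by (metis finite_UN finite_lessThan lessThan_iff)
        show ?thesis
        proof (cases "i = j")
          case False then show ?thesis using i j by blast
        next
          case True
          obtain l where l: "l < k" "l \<noteq> i"
            using assms(7) i(1) by (metis less_one nat_neq_iff zero_less_one less_trans)
          have "infinite (A!l \<inter> Q) \<or> infinite (A!l - Q)"
            using Ainf[OF l(1)] by (metis Int_Diff_Un finite_UnI)
          then show ?thesis using i j l True by blast
        qed
      qed
      then obtain a b where ab: "a < k" "b < k" "a \<noteq> b" "infinite (A!a \<inter> Q)" "infinite (A!b - Q)"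
        by blast
      define A' where "A' = [A!a \<inter> Q, A!b - Q]"
      have QS: "Q \<subseteq> S" using Q assms(2) by auto
      have cp: "class_problem S A'"
        unfolding class_problem_def pairwise_disj_def A'_def
        using ab AS by (auto simp: less_Suc_eq nth_Cons')
      have vl: "vec_le A' A"
        unfolding vec_le_def A'_def
        apply (simp add: assms(6))
        apply (rule conjI) using assms(7) apply simp
        apply (rule exI[where x="\<lambda>n. if n = 0 then a else b"])
        using ab by (auto simp: inj_on_def less_Suc_eq nth_Cons')
      have "A' \<in> class_k S F (length A')"
        unfolding class_k_def
      proof (intro CollectI conjI cp refl exI)
        show "F_partition S F [Q, S - Q]"
          unfolding F_partition_def pairwise_disj_def using Q QS
          by (auto simp: less_Suc_eq nth_Cons')
        show "length [Q, S - Q] = length A'" by (simp add: A'_def)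
        show "vec_le A' [Q, S - Q]"
          unfolding vec_le_def A'_def
          apply simp
          apply (rule exI[where x="\<lambda>n. n"])
          using AS ab(2) by (auto simp: less_Suc_eq nth_Cons')
      qed
      moreover have "length A' > 1" by (simp add: A'_def)
      ultimately show False using core cp vl unfolding core_k_def by blast
    qed
  qed
next
  assume coh: "cohesive S F (\<Union>(set A))"
  let ?U = "\<Union>(set A)"
  have ne: "{} \<in> F" using assms(3) unfolding nontrivial_def by auto
  show "A \<in> core_k S F k"
    unfolding core_k_def
  proof (intro CollectI conjI assms(5,6) allI impI)
    fix A' assume h: "class_problem S A' \<and> vec_le A' A \<and> 1 < length A'"
    show "A' \<notin> class_k S F (length A')"
    proof
      assume "A' \<in> class_k S F (length A')"
      then obtain Q where Qp: "F_partition S F Q" and Ql: "length Q = length A'"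
        and vQ: "vec_le A' Q" unfolding class_k_def by blast
      obtain \<sigma> where s: "inj_on \<sigma> {0..<length A'}" "\<sigma> ` {0..<length A'} \<subseteq> {0..<length Q}"
        "\<forall>i < length A'. A'!i \<subseteq> Q!(\<sigma> i)" using vQ unfolding vec_le_def by blast
      obtain \<tau> where t: "\<tau> ` {0..<length A'} \<subseteq> {0..<length A}"
        "\<forall>i < length A'. A'!i \<subseteq> A!(\<tau> i)" using h unfolding vec_le_def by blast
      let ?m = "length A'"
      let ?p = "\<sigma> 0" let ?q = "\<sigma> 1"
      have pm: "?p < ?m" "?q < ?m" using s(2) h Ql by (auto simp: image_subset_iff)
      have pq: "?p \<noteq> ?q" using s(1) h by (metis One_nat_def atLeastLessThan_iff inj_on_contraD le0 less_one zero_neq_one less_trans)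
      have A'inf: "infinite (A'!0)" "infinite (A'!1)" using h unfolding class_problem_def by (metis One_nat_def less_trans zero_less_one)+
      have A'U0: "\<And>i. i < ?m \<Longrightarrow> A'!i \<subseteq> ?U"
      proof -
        fix i assume i: "i < ?m"
        then have "\<tau> i < length A" using t(1) by (auto simp: image_subset_iff)
        then have "A ! \<tau> i \<subseteq> ?U" by (meson Union_upper nth_mem)
        then show "A'!i \<subseteq> ?U" using t(2) i by blast
      qed
      have A'U: "A'!0 \<subseteq> ?U" "A'!1 \<subseteq> ?U"
        using A'U0[of 0] A'U0[of 1] h by (metis One_nat_def less_trans zero_less_one)+
      have Qdisj: "\<And>i j. i < ?m \<Longrightarrow> j < ?m \<Longrightarrow> i \<noteq> j \<Longrightarrow> Q ! i \<inter> Q ! j = {}"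
        using Qp Ql unfolding F_partition_def pairwise_disj_def by auto
      have QF: "\<And>i. i < ?m \<Longrightarrow> Q ! i \<in> F"
        using Qp Ql unfolding F_partition_def by (auto intro!: nth_mem)
      have QU: "\<Union>(set Q) = S" using Qp unfolding F_partition_def by auto
      let ?P = "Q ! ?p"
      have PF: "?P \<in> F" using QF pm by auto
      have compl: "S - ?P = \<Union>((\<lambda>j. Q!j) ` ({0..<?m} - {?p}))"
      proof
        show "S - ?P \<subseteq> \<Union>((\<lambda>j. Q!j) ` ({0..<?m} - {?p}))"
        proof
          fix x assume x: "x \<in> S - ?P"
          then obtain j where "j < ?m" "x \<in> Q!j" using QU Ql by (auto simp: in_set_conv_nth)
          then show "x \<in> \<Union>((\<lambda>j. Q!j) ` ({0..<?m} - {?p}))" using x by (cases "j = ?p") auto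
        qed
        show "\<Union>((\<lambda>j. Q!j) ` ({0..<?m} - {?p})) \<subseteq> S - ?P"
          using Qdisj pm QU Ql by (fastforce simp: in_set_conv_nth)
      qed
      have cF: "S - ?P \<in> F" unfolding compl
        by (rule union_in_F) (use QF ne assms(4) in auto)
      have h0: "0 < ?m" "1 < ?m" using h by auto
      have "A'!0 \<subseteq> ?U \<inter> ?P" using A'U s(3) h0 by blast
      hence i1: "infinite (?U \<inter> ?P)" using A'inf infinite_mono' by blast
      have "A'!1 \<subseteq> Q!?q" using s(3) h0 by blast
      hence "A'!1 \<subseteq> ?U - ?P" using A'U Qdisj[of ?p ?q] pm pq by auto
      hence i2: "infinite (?U - ?P)" using A'inf infinite_mono' by blast
      show False using coh PF cF i1 i2 unfolding cohesive_def by blast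
    qed
  qed
qed

end
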